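(* Let $\mathfrak p=(p_i)_{i\in\mathbb N}$ be a probability distribution supported by $\mathbb N$ and let $D\subseteq\mathbb N$ be nonempty (finite or infinite). If $d\ge 0$ satisfies $\sum_{i\in D}p_i^{d}=1$, then $\dim_H \pi_{\mathfrak p}(D^{\mathbb N})=d$.
   Context: $\mathbb N=\{1,2,3,\dots\}$. A probability distribution $\mathfrak p=(p_i)_{i\in\mathbb N}$ is supported by $\mathbb N$ if $p_i\in(0,1)$ for all $i$ and $\sum_{i=1}^\infty p_i=1$. Set $\widehat{p_1}=0$ and $\widehat{p_n}=\sum_{i=1}^{n-1}p_i$ for $n\ge 2$. For $n\in\mathbb N$ let $T_n:[0,1)\to[0,1)$, $T_n x=p_n x+\widehat{p_n}$. Define $\pi_{\mathfrak p}:\mathbb N^{\mathbb N}\to[0,1)$ by $\pi_{\mathfrak p}((n_j))=\lim_{j\to\infty}T_{n_1}\circ\cdots\circ T_{n_j}(0)=\widehat{p_{n_1}}+\sum_{j=1}^\infty p_{n_1}\cdots p_{n_j}\widehat{p_{n_{j+1}}}$; this is a bijection onto $[0,1)$, and for $x\in[0,1)$ the entries of $\pi_{\mathfrak p}^{-1}(x)$ are called the digits of $x$ with respect to $\mathfrak p$. $\dim_H$ denotes Hausdorff dimension. *)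

theory Defs
  imports "HOL-Analysis.Analysis"
begin

definition delta_cover :: "real \<Rightarrow> real set \<Rightarrow> (nat \<Rightarrow> real set) \<Rightarrow> bool" where
  "delta_cover \<delta> E U \<longleftrightarrow> E \<subseteq> (\<Union>i. U i) \<and> (\<forall>i. bounded (U i) \<and> diameter (U i) \<le> \<delta>)"

definition hausdorff_content :: "real \<Rightarrow> real \<Rightarrow> real set \<Rightarrow> ennreal" where
  "hausdorff_content s \<delta> E =
     (INF U\<in>{U. delta_cover \<delta> E U}. (\<Sum>i. ennreal (diameter (U i) powr s)))"

definition hausdorff_measure :: "real \<Rightarrow> real set \<Rightarrow> ennreal" where
  "hausdorff_measure s E = (SUP \<delta>\<in>{0<..}. hausdorff_content s \<delta> E)"

definition hausdorff_dim :: "real set \<Rightarrow> real" where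
  "hausdorff_dim E = Inf {s. 0 \<le> s \<and> hausdorff_measure s E = 0}"

definition prob_supported_N :: "(nat \<Rightarrow> real) \<Rightarrow> bool" where
  "prob_supported_N p \<longleftrightarrow> (\<forall>i\<ge>1. 0 < p i \<and> p i < 1) \<and> (p has_sum 1) {1..}"

definition phat :: "(nat \<Rightarrow> real) \<Rightarrow> nat \<Rightarrow> real" where
  "phat p n = (\<Sum>i\<in>{1..<n}. p i)"

definition Tmap :: "(nat \<Rightarrow> real) \<Rightarrow> nat \<Rightarrow> real \<Rightarrow> real" where
  "Tmap p n x = p n * x + phat p n"

text \<open>Digit sequences are indexed from 0: omega 0 is n_1.
  Tcomp p \<omega> j = T_{n_1} o ... o T_{n_j}.\<close>
fun Tcomp :: "(nat \<Rightarrow> real) \<Rightarrow> (nat \<Rightarrow> nat) \<Rightarrow> nat \<Rightarrow> real \<Rightarrow> real" where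
  "Tcomp p \<omega> 0 = id"
| "Tcomp p \<omega> (Suc j) = Tcomp p \<omega> j \<circ> Tmap p (\<omega> j)"

definition coding_map :: "(nat \<Rightarrow> real) \<Rightarrow> (nat \<Rightarrow> nat) \<Rightarrow> real" where
  "coding_map p \<omega> = lim (\<lambda>j. Tcomp p \<omega> j 0)"

end

theory Submission
  imports Defs "HOL-Library.Countable"
begin



fun lmap :: "(nat \<Rightarrow> real) \<Rightarrow> nat list \<Rightarrow> real \<Rightarrow> real" where
  "lmap p [] = id"
| "lmap p (i # w) = Tmap p i \<circ> lmap p w"

definition PP :: "(nat \<Rightarrow> real) \<Rightarrow> nat list \<Rightarrow> real" where
  "PP p w = prod_list (map p w)"

definition pfx :: "nat list \<Rightarrow> nat list \<Rightarrow> bool" where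
  "pfx w v \<longleftrightarrow> (\<exists>u. v = w @ u)"

lemma split_nonpfx: "\<not> pfx w v \<Longrightarrow> \<not> pfx v w \<Longrightarrow>
   \<exists>c i j w' v'. w = c @ i # w' \<and> v = c @ j # v' \<and> i \<noteq> j"
proof (induction w arbitrary: v)
  case Nil thus ?case by (auto simp: pfx_def)
next
  case (Cons a w)
  show ?case
  proof (cases v)
    case Nil thus ?thesis using Cons by (auto simp: pfx_def)
  next
    case (Cons b v')
    show ?thesis
    proof (cases "a = b")
      case False thus ?thesis using Cons by (metis append_Nil)
    next
      case True
      have "\<not> pfx w v'" "\<not> pfx v' w" using Cons.prems Cons True by (auto simp: pfx_def)
      then obtain c i j w'' v'' where "w = c @ i # w''" "v' = c @ j # v''" "i \<noteq> j"
        using Cons.IH by blast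
      thus ?thesis using Cons True by (metis append_Cons)
    qed
  qed
qed

definition pre :: "(nat \<Rightarrow> nat) \<Rightarrow> nat \<Rightarrow> nat list" where
  "pre \<omega> n = map \<omega> [0..<n]"

definition sh :: "(nat \<Rightarrow> nat) \<Rightarrow> nat \<Rightarrow> nat \<Rightarrow> nat" where
  "sh \<omega> n = (\<lambda>k. \<omega> (k + n))"

lemma lmap_affine: "lmap p w x = lmap p w 0 + PP p w * x"
proof (induction w arbitrary: x)
  case Nil thus ?case by (simp add: PP_def)
next
  case (Cons i w)
  have e: "lmap p w x = lmap p w 0 + PP p w * x" by (rule Cons.IH)
  show ?case by (simp add: e PP_def Tmap_def algebra_simps)
qed

lemma lmap_append: "lmap p (u @ v) = lmap p u \<circ> lmap p v"
  by (induction u) auto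

lemma PP_append: "PP p (u @ v) = PP p u * PP p v"
  by (simp add: PP_def)

lemma PP_Cons: "PP p (i # v) = p i * PP p v" and PP_Nil: "PP p [] = 1"
  by (simp_all add: PP_def)

lemma pre_Suc: "pre \<omega> (Suc n) = pre \<omega> n @ [\<omega> n]"
  by (simp add: pre_def)

lemma length_pre[simp]: "length (pre \<omega> n) = n"
  by (simp add: pre_def)

lemma pre_add: "pre \<omega> (n + j) = pre \<omega> n @ pre (sh \<omega> n) j"
  by (induction j) (auto simp: pre_def sh_def add.commute)

lemma take_pre: "k \<le> n \<Longrightarrow> take k (pre \<omega> n) = pre \<omega> k"
  by (simp add: pre_def take_map)

lemma Tcomp_pre: "Tcomp p \<omega> n = lmap p (pre \<omega> n)"
proof (induction n)
  case 0 show ?case by (simp add: pre_def)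
next
  case (Suc n) thus ?case by (simp add: pre_Suc lmap_append)
qed

lemma set_pre: "set (pre \<omega> n) = \<omega> ` {..<n}"
  by (auto simp: pre_def)

locale digits =
  fixes p :: "nat \<Rightarrow> real"
  assumes psN: "prob_supported_N p"
begin

lemma p_pos: "i \<ge> 1 \<Longrightarrow> 0 < p i" and p_lt1: "i \<ge> 1 \<Longrightarrow> p i < 1"
  using psN by (auto simp: prob_supported_N_def)

lemma p_pos0: "Suc 0 \<le> i \<Longrightarrow> 0 < p i" and p_nn: "Suc 0 \<le> i \<Longrightarrow> 0 \<le> p i"
  using p_pos[of i] by auto

lemma hs: "(p has_sum 1) {1..}"
  using psN by (auto simp: prob_supported_N_def)

lemma sum_le1: "finite B \<Longrightarrow> B \<subseteq> {1..} \<Longrightarrow> sum p B \<le> 1"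
  by (rule finite_sum_le_has_sum[OF hs]) (auto intro: p_nn)

lemma phat_nonneg: "0 \<le> phat p n"
  unfolding phat_def by (rule sum_nonneg) (auto intro: p_nn)

lemma phat_Suc: "n \<ge> 1 \<Longrightarrow> phat p (Suc n) = phat p n + p n"
  unfolding phat_def by simp

lemma phat_p_lt1: assumes "n \<ge> 1" shows "phat p n + p n < 1"
proof -
  have "sum p {1..<Suc (Suc n)} \<le> 1" by (rule sum_le1) auto
  moreover have "sum p {1..<Suc (Suc n)} = phat p n + p n + p (Suc n)"
    using assms by (simp add: phat_def)
  moreover have "0 < p (Suc n)" by (rule p_pos) simp
  ultimately show ?thesis by linarith
qed

lemma phat_mono_gap: assumes "1 \<le> i" "i < j" shows "phat p i + p i \<le> phat p j"
proof -
  have "phat p j = sum p {1..<Suc i} + sum p {Suc i..<j}"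
    unfolding phat_def using assms by (subst sum.atLeastLessThan_concat) auto
  moreover have "0 \<le> sum p {Suc i..<j}" by (rule sum_nonneg) (auto intro: p_nn)
  moreover have "sum p {1..<Suc i} = phat p i + p i" using assms by (simp add: phat_def)
  ultimately show ?thesis by linarith
qed

definition M where "M = max (p 1) (1 - p 1)"

lemma M_lt1: "M < 1" and M_pos: "0 < M"
  using p_pos[of 1] p_lt1[of 1] by (auto simp: M_def)

lemma p_le_M: assumes "i \<ge> 1" shows "p i \<le> M"
proof (cases "i = 1")
  case True thus ?thesis by (simp add: M_def)
next
  case False
  have "sum p {1, i} \<le> 1" by (rule sum_le1) (use assms in auto)
  thus ?thesis using False by (simp add: M_def)
qed

definition dig :: "(nat \<Rightarrow> nat) \<Rightarrow> bool" where "dig \<omega> \<longleftrightarrow> (\<forall>j. 1 \<le> \<omega> j)"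

lemma PP_nonneg: "set w \<subseteq> {1..} \<Longrightarrow> 0 \<le> PP p w"
  by (induction w) (auto simp: PP_def intro!: mult_nonneg_nonneg p_nn)

lemma PP_pos: "set w \<subseteq> {1..} \<Longrightarrow> 0 < PP p w"
  by (induction w) (auto simp: PP_def intro!: mult_pos_pos p_pos0)

lemma PP_le_M: "set w \<subseteq> {1..} \<Longrightarrow> PP p w \<le> M ^ length w"
proof (induction w)
  case Nil thus ?case by (simp add: PP_def)
next
  case (Cons i w)
  have "PP p (i # w) = p i * PP p w" by (simp add: PP_def)
  also have "\<dots> \<le> M * M ^ length w"
    using Cons by (intro mult_mono p_le_M PP_nonneg) (auto intro: less_imp_le M_pos)
  finally show ?case by simp
qed

lemma lmap_unit: "set w \<subseteq> {1..} \<Longrightarrow> 0 \<le> x \<Longrightarrow> x \<le> 1 \<Longrightarrow> 0 \<le> lmap p w x \<and> lmap p w x \<le> 1"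
proof (induction w arbitrary: x)
  case Nil thus ?case by simp
next
  case (Cons i w)
  let ?y = "lmap p w x"
  have y: "0 \<le> ?y" "?y \<le> 1" using Cons by auto
  have i: "1 \<le> i" using Cons by auto
  have "p i * ?y \<le> p i" using y p_pos[OF i] by (simp add: mult_le_cancel_left1)
  moreover have "0 \<le> p i * ?y" using y p_pos[OF i] by simp
  ultimately show ?case using phat_nonneg[of i] phat_p_lt1[OF i] by (simp add: Tmap_def)
qed

lemma lmap0_bounds: "set w \<subseteq> {1..} \<Longrightarrow> 0 \<le> lmap p w 0 \<and> lmap p w 0 + PP p w \<le> 1"
  using lmap_unit[of w 1] lmap_unit[of w 0] lmap_affine[of p w 1] by simp

lemma set_pre_dig: "dig \<omega> \<Longrightarrow> set (pre \<omega> n) \<subseteq> {1..}"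
  by (auto simp: dig_def set_pre)

lemma dig_sh: "dig \<omega> \<Longrightarrow> dig (sh \<omega> n)"
  by (auto simp: dig_def sh_def)

definition g :: "(nat \<Rightarrow> nat) \<Rightarrow> nat \<Rightarrow> real" where "g \<omega> j = lmap p (pre \<omega> j) 0"

lemma g_Suc: "g \<omega> (Suc j) = g \<omega> j + PP p (pre \<omega> j) * phat p (\<omega> j)"
  unfolding g_def pre_Suc lmap_append
  by (simp add: Tmap_def lmap_affine[of p "pre \<omega> j" "phat p (\<omega> j)"])

lemma g_conv: assumes "dig \<omega>" shows "g \<omega> \<longlonglongrightarrow> coding_map p \<omega>"
  and "0 \<le> coding_map p \<omega>" "coding_map p \<omega> \<le> 1"
proof -
  have inc: "incseq (g \<omega>)"
  proof (rule incseq_SucI)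
    fix j show "g \<omega> j \<le> g \<omega> (Suc j)" unfolding g_Suc
      using PP_nonneg[OF set_pre_dig[OF assms]] phat_nonneg by simp
  qed
  have b: "0 \<le> g \<omega> j \<and> g \<omega> j \<le> 1" for j
    unfolding g_def using lmap_unit[OF set_pre_dig[OF assms], of 0 j] by simp
  have "convergent (g \<omega>)"
    by (rule Bseq_monoseq_convergent[OF _ incseq_imp_monoseq[OF inc]]) (use b in \<open>auto intro!: BseqI'[where K=1]\<close>)
  moreover have "coding_map p \<omega> = lim (g \<omega>)"
    unfolding coding_map_def g_def Tcomp_pre ..
  ultimately show gl: "g \<omega> \<longlonglongrightarrow> coding_map p \<omega>" by (simp add: convergent_LIMSEQ_iff)
  show "0 \<le> coding_map p \<omega>" by (rule LIMSEQ_le_const[OF gl]) (use b in auto)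
  show "coding_map p \<omega> \<le> 1" by (rule LIMSEQ_le_const2[OF gl]) (use b in auto)
qed

lemma coding_shift: assumes "dig \<omega>"
  shows "coding_map p \<omega> = lmap p (pre \<omega> n) (coding_map p (sh \<omega> n))"
proof -
  have "(\<lambda>j. g \<omega> (j + n)) \<longlonglongrightarrow> coding_map p \<omega>"
    using g_conv(1)[OF assms] by (rule LIMSEQ_ignore_initial_segment)
  moreover have "(\<lambda>j. g \<omega> (j + n)) = (\<lambda>j. lmap p (pre \<omega> n) 0 + PP p (pre \<omega> n) * g (sh \<omega> n) j)"
  proof
    fix j show "g \<omega> (j + n) = lmap p (pre \<omega> n) 0 + PP p (pre \<omega> n) * g (sh \<omega> n) j"
      by (simp add: g_def add.commute[of _ n] pre_add lmap_append
           lmap_affine[of p "pre \<omega> n" "lmap p (pre (sh \<omega> n) j) 0"])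
  qed
  moreover have "(\<lambda>j. lmap p (pre \<omega> n) 0 + PP p (pre \<omega> n) * g (sh \<omega> n) j) \<longlonglongrightarrow>
       lmap p (pre \<omega> n) 0 + PP p (pre \<omega> n) * coding_map p (sh \<omega> n)"
    by (intro tendsto_intros g_conv(1) dig_sh assms)
  ultimately have "coding_map p \<omega> = lmap p (pre \<omega> n) 0 + PP p (pre \<omega> n) * coding_map p (sh \<omega> n)"
    using LIMSEQ_unique by metis
  thus ?thesis by (simp only: lmap_affine[of p "pre \<omega> n" "coding_map p (sh \<omega> n)"])
qed

lemma coding_lt1: assumes "dig \<omega>" shows "coding_map p \<omega> < 1"
proof -
  have "coding_map p \<omega> = lmap p (pre \<omega> 1) (coding_map p (sh \<omega> 1))" by (rule coding_shift[OF assms])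
  also have "\<dots> = phat p (\<omega> 0) + p (\<omega> 0) * coding_map p (sh \<omega> 1)"
    by (simp add: pre_def Tmap_def)
  also have "\<dots> \<le> phat p (\<omega> 0) + p (\<omega> 0)"
    using g_conv(3)[OF dig_sh[OF assms]] p_pos[of "\<omega> 0"] assms
    by (simp add: dig_def mult_le_cancel_left1)
  also have "\<dots> < 1" using phat_p_lt1 assms by (simp add: dig_def)
  finally show ?thesis .
qed

definition I :: "nat list \<Rightarrow> real set" where "I w = lmap p w ` {0..<1}"

lemma I_eq: assumes "set w \<subseteq> {1..}" shows "I w = {lmap p w 0 ..< lmap p w 0 + PP p w}"
proof -
  have pos: "0 < PP p w" by (rule PP_pos[OF assms])
  have "I w = (\<lambda>x. lmap p w 0 + PP p w * x) ` {0..<1}"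
    unfolding I_def by (rule image_cong[OF refl], rule lmap_affine)
  also have "\<dots> = {lmap p w 0 ..< lmap p w 0 + PP p w}"
  proof safe
    fix y assume "y \<in> {lmap p w 0 ..< lmap p w 0 + PP p w}"
    hence "(y - lmap p w 0) / PP p w \<in> {0..<1}" "y = lmap p w 0 + PP p w * ((y - lmap p w 0) / PP p w)"
      using pos by (auto simp: field_simps)
    thus "y \<in> (\<lambda>x. lmap p w 0 + PP p w * x) ` {0..<1}" by blast
  qed (use pos in auto)
  finally show ?thesis .
qed

lemma coding_in_I: assumes "dig \<omega>" shows "coding_map p \<omega> \<in> I (pre \<omega> n)"
  unfolding I_def
proof (rule image_eqI[where x="coding_map p (sh \<omega> n)"])
  show "coding_map p \<omega> = lmap p (pre \<omega> n) (coding_map p (sh \<omega> n))" by (rule coding_shift[OF assms])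
  show "coding_map p (sh \<omega> n) \<in> {0..<1}"
    using g_conv(2)[OF dig_sh[OF assms]] coding_lt1[OF dig_sh[OF assms]] by simp
qed

lemma I_sub01: assumes "set w \<subseteq> {1..}" shows "I w \<subseteq> {0..<1}"
proof -
  have "0 \<le> lmap p w 0" "lmap p w 0 + PP p w \<le> 1" using lmap0_bounds[OF assms] by auto
  thus ?thesis unfolding I_eq[OF assms] by auto
qed

lemma I_append_sub: assumes "set (u @ v) \<subseteq> {1..}" shows "I (u @ v) \<subseteq> I u"
proof -
  have "I (u @ v) = lmap p u ` I v" unfolding I_def lmap_append image_comp ..
  also have "\<dots> \<subseteq> lmap p u ` {0..<1}" using I_sub01[of v] assms by (intro image_mono) auto
  finally show ?thesis unfolding I_def .
qed

lemma I_single: assumes "1 \<le> k" shows "I [k] = {phat p k ..< phat p k + p k}"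
proof -
  have "I [k] = {lmap p [k] 0 ..< lmap p [k] 0 + PP p [k]}" by (rule I_eq) (use assms in auto)
  moreover have "lmap p [k] 0 = phat p k" by (simp add: Tmap_def)
  moreover have "PP p [k] = p k" by (simp add: PP_def)
  ultimately show ?thesis by simp
qed

lemma I_single_disj: assumes "1 \<le> i" "1 \<le> j" "i \<noteq> j" shows "I [i] \<inter> I [j] = {}"
proof (cases "i < j")
  case True
  have "phat p i + p i \<le> phat p j" by (rule phat_mono_gap) (use assms True in auto)
  thus ?thesis unfolding I_single[OF assms(1)] I_single[OF assms(2)] by auto
next
  case False hence "j < i" using assms by simp
  hence "phat p j + p j \<le> phat p i" by (intro phat_mono_gap) (use assms in auto)
  thus ?thesis unfolding I_single[OF assms(1)] I_single[OF assms(2)] by auto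
qed

lemma lmap_inj: assumes "set w \<subseteq> {1..}" shows "inj (lmap p w)"
proof (rule injI)
  fix x y assume "lmap p w x = lmap p w y"
  hence "lmap p w 0 + PP p w * x = lmap p w 0 + PP p w * y" using lmap_affine[of p w x] lmap_affine[of p w y] by simp
  thus "x = y" using PP_pos[OF assms] by simp
qed

lemma I_disj: assumes "set w \<subseteq> {1..}" "set v \<subseteq> {1..}"
  "\<not> pfx w v" "\<not> pfx v w" shows "I w \<inter> I v = {}"
proof -
  obtain c i j w' v' where wv: "w = c @ i # w'" "v = c @ j # v'" "i \<noteq> j"
    using split_nonpfx[OF assms(3,4)] by blast
  have "I w \<subseteq> I (c @ [i])" using I_append_sub[of "c @ [i]" w'] assms wv by auto
  moreover have "I v \<subseteq> I (c @ [j])" using I_append_sub[of "c @ [j]" v'] assms wv by auto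
  moreover have "I (c @ [i]) \<inter> I (c @ [j]) = {}"
  proof -
    have "I (c @ [i]) = lmap p c ` I [i]" "I (c @ [j]) = lmap p c ` I [j]"
      unfolding I_def lmap_append by (auto simp: image_comp)
    moreover have "I [i] \<inter> I [j] = {}" using I_single_disj wv assms by auto
    moreover have "inj (lmap p c)" by (rule lmap_inj) (use assms wv in auto)
    ultimately show ?thesis by (simp add: image_Int[symmetric])
  qed
  ultimately show ?thesis by blast
qed

end



lemma power_powr: "((x::real) ^ n) powr a = (x powr a) ^ n"
  by (induction n) (auto simp: powr_mult)

context digits begin

lemma PP_pre_Suc: "PP p (pre \<omega> (Suc n)) = PP p (pre \<omega> n) * p (\<omega> n)"
  by (simp add: pre_Suc PP_append PP_def)

lemma cont_coord: "continuous_on UNIV (\<lambda>\<omega>::nat\<Rightarrow>nat. (h::nat\<Rightarrow>real) (\<omega> n))"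
proof -
  have "continuous_on UNIV (h \<circ> (\<lambda>\<omega>::nat\<Rightarrow>nat. \<omega> n))"
    by (rule continuous_on_compose[OF continuous_on_product_coordinates]) simp
  thus ?thesis by (simp add: o_def)
qed

lemma cont_gP: "continuous_on UNIV (\<lambda>\<omega>. g \<omega> n) \<and> continuous_on UNIV (\<lambda>\<omega>. PP p (pre \<omega> n))"
proof (induction n)
  case 0 show ?case by (simp add: g_def pre_def PP_def)
next
  case (Suc n)
  have c1: "continuous_on UNIV (\<lambda>\<omega>::nat\<Rightarrow>nat. phat p (\<omega> n))" by (rule cont_coord)
  have c2: "continuous_on UNIV (\<lambda>\<omega>::nat\<Rightarrow>nat. p (\<omega> n))" by (rule cont_coord)
  show ?case unfolding g_Suc PP_pre_Suc using Suc c1 c2 by (auto intro!: continuous_intros)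
qed

lemma coding_minus_g: assumes "dig \<omega>"
  shows "coding_map p \<omega> - g \<omega> n = PP p (pre \<omega> n) * coding_map p (sh \<omega> n)"
  using coding_shift[OF assms, of n] lmap_affine[of p "pre \<omega> n" "coding_map p (sh \<omega> n)"]
  by (simp add: g_def)

lemma cont_coding: "continuous_on {\<omega>. dig \<omega>} (coding_map p)"
proof (rule uniform_limit_theorem[where f="\<lambda>n \<omega>. g \<omega> n" and F=sequentially])
  show "\<forall>\<^sub>F n in sequentially. continuous_on {\<omega>. dig \<omega>} (\<lambda>\<omega>. g \<omega> n)"
    by (intro always_eventually allI continuous_on_subset[OF conjunct1[OF cont_gP]]) auto
  show "uniform_limit {\<omega>. dig \<omega>} (\<lambda>n \<omega>. g \<omega> n) (coding_map p) sequentially"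
  proof (rule uniform_limitI)
    fix e :: real assume e: "0 < e"
    have "(\<lambda>n. M ^ n) \<longlonglongrightarrow> 0" by (rule LIMSEQ_realpow_zero) (use M_pos M_lt1 in auto)
    hence ev: "\<forall>\<^sub>F n in sequentially. M ^ n < e" using e by (rule order_tendstoD)
    show "\<forall>\<^sub>F n in sequentially. \<forall>\<omega>\<in>{\<omega>. dig \<omega>}. dist (g \<omega> n) (coding_map p \<omega>) < e"
    proof (rule eventually_mono[OF ev], safe)
      fix n \<omega> assume n: "M ^ n < e" and d: "dig \<omega>"
      have "dist (g \<omega> n) (coding_map p \<omega>) = \<bar>coding_map p \<omega> - g \<omega> n\<bar>"
        by (simp add: dist_real_def abs_minus_commute)
      also have "\<dots> = PP p (pre \<omega> n) * coding_map p (sh \<omega> n)"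
        unfolding coding_minus_g[OF d, of n]
        using PP_nonneg[OF set_pre_dig[OF d]] g_conv(2)[OF dig_sh[OF d]] by simp
      also have "\<dots> \<le> PP p (pre \<omega> n)"
        using PP_nonneg[OF set_pre_dig[OF d]] g_conv(3)[OF dig_sh[OF d]] by (simp add: mult_left_le)
      also have "\<dots> \<le> M ^ n" using PP_le_M[OF set_pre_dig[OF d]] by simp
      finally show "dist (g \<omega> n) (coding_map p \<omega>) < e" using n by simp
    qed
  qed
qed simp

lemma compact_K: assumes "finite F" "F \<subseteq> {1..}"
  shows "compact (coding_map p ` {\<omega>. \<forall>j. \<omega> j \<in> F})"
proof (rule compact_continuous_image)
  have e: "{\<omega>::nat\<Rightarrow>nat. \<forall>j. \<omega> j \<in> F} = PiE UNIV (\<lambda>_. F)" by (auto simp: PiE_UNIV_domain Pi_iff)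
  have "compactin (product_topology (\<lambda>i. euclidean) UNIV) (PiE UNIV (\<lambda>_::nat. F))"
    using assms(1) by (auto simp: compactin_PiE compactin_euclidean_iff intro: finite_imp_compact)
  hence "compact (PiE UNIV (\<lambda>_::nat. F))" unfolding euclidean_product_topology compactin_euclidean_iff .
  thus "compact {\<omega>::nat\<Rightarrow>nat. \<forall>j. \<omega> j \<in> F}" unfolding e .
  show "continuous_on {\<omega>. \<forall>j. \<omega> j \<in> F} (coding_map p)"
    by (rule continuous_on_subset[OF cont_coding]) (use assms in \<open>auto simp: dig_def\<close>)
qed

end



context digits begin

lemma words_sum_le1:
  assumes fin: "\<And>B. finite B \<Longrightarrow> B \<subseteq> D \<Longrightarrow> (\<Sum>i\<in>B. p i powr d) \<le> 1" and D: "D \<subseteq> {1..}"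
  shows "finite W \<Longrightarrow> W \<subseteq> {w. set w \<subseteq> D \<and> length w = n} \<Longrightarrow> (\<Sum>w\<in>W. PP p w powr d) \<le> 1"
proof (induction n arbitrary: W)
  case 0
  hence "W \<subseteq> {[]}" by auto
  hence "W = {} \<or> W = {[]}" by auto
  thus ?case by (auto simp: PP_def)
next
  case (Suc n)
  let ?H = "hd ` W" and ?T = "tl ` W"
  have fH: "finite ?H" and fT: "finite ?T" using Suc by auto
  have HD: "?H \<subseteq> D"
  proof
    fix i assume "i \<in> ?H" then obtain w where "w \<in> W" "i = hd w" by auto
    moreover then have "w \<noteq> []" "set w \<subseteq> D" using Suc.prems by auto
    ultimately show "i \<in> D" by (metis hd_in_set subsetD)
  qed
  have TW: "?T \<subseteq> {w. set w \<subseteq> D \<and> length w = n}"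
  proof
    fix v assume "v \<in> ?T" then obtain w where "w \<in> W" "v = tl w" by auto
    moreover then have "set w \<subseteq> D" "length w = Suc n" using Suc.prems by auto
    ultimately show "v \<in> {w. set w \<subseteq> D \<and> length w = n}"
      by (cases w) auto
  qed
  have sub: "W \<subseteq> (\<lambda>(i, v). i # v) ` (?H \<times> ?T)"
  proof
    fix w assume w: "w \<in> W"
    then have "w \<noteq> []" using Suc.prems by auto
    then have "w = (\<lambda>(i, v). i # v) (hd w, tl w)" by simp
    thus "w \<in> (\<lambda>(i, v). i # v) ` (?H \<times> ?T)" using w by blast
  qed
  have nn: "\<And>w. set w \<subseteq> {1..} \<Longrightarrow> 0 \<le> PP p w powr d" by simp
  have "(\<Sum>w\<in>W. PP p w powr d) \<le> (\<Sum>w\<in>(\<lambda>(i, v). i # v) ` (?H \<times> ?T). PP p w powr d)"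
    by (rule sum_mono2) (use sub fH fT in auto)
  also have "\<dots> = (\<Sum>(i, v)\<in>?H \<times> ?T. PP p (i # v) powr d)"
    by (subst sum.reindex) (auto simp: inj_on_def case_prod_beta)
  also have "\<dots> = (\<Sum>(i, v)\<in>?H \<times> ?T. p i powr d * PP p v powr d)"
    by (rule sum.cong) (auto simp: PP_def powr_mult)
  also have "\<dots> = (\<Sum>i\<in>?H. p i powr d) * (\<Sum>v\<in>?T. PP p v powr d)"
    by (simp add: sum_product sum.cartesian_product)
  also have "\<dots> \<le> 1 * 1"
    by (intro mult_mono fin HD fH Suc.IH fT TW) (auto intro: sum_nonneg)
  finally show ?case by simp
qed

lemma content_upper:
  assumes D: "D \<subseteq> {1..}" and hsD: "((\<lambda>i. p i powr d) has_sum 1) D"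
    and d: "0 \<le> d" "d < s" and \<delta>: "0 < \<delta>"
  shows "hausdorff_content s \<delta> (coding_map p ` {\<omega>. \<forall>j. \<omega> j \<in> D}) = 0"
proof -
  let ?E = "coding_map p ` {\<omega>. \<forall>j. \<omega> j \<in> D}"
  have fin: "(\<Sum>i\<in>B. p i powr d) \<le> 1" if "finite B" "B \<subseteq> D" for B
    by (rule finite_sum_le_has_sum[OF hsD that]) simp
  define K where "K = M powr (s - d)"
  have K: "0 < K" "K < 1" unfolding K_def using M_pos M_lt1 d powr_less_mono2[of "s-d" M 1]
    by auto
  have "hausdorff_content s \<delta> ?E \<le> 0"
  proof (rule ennreal_le_epsilon)
    fix e :: real assume e: "0 < e"
    have t1: "(\<lambda>n. M ^ n) \<longlonglongrightarrow> 0" by (rule LIMSEQ_realpow_zero) (use M_pos M_lt1 in auto)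
    have t2: "(\<lambda>n. K ^ n) \<longlonglongrightarrow> 0" by (rule LIMSEQ_realpow_zero) (use K in auto)
    have "\<forall>\<^sub>F n in sequentially. M ^ n < \<delta> \<and> K ^ n < e"
      using order_tendstoD(2)[OF t1 \<delta>] order_tendstoD(2)[OF t2 e] by (rule eventually_conj)
    then obtain n where n: "M ^ n < \<delta>" "K ^ n < e" by (auto simp: eventually_sequentially)
    define W where "W = {w. set w \<subseteq> D \<and> length w = n}"
    define cl where "cl w = {lmap p w 0 .. lmap p w 0 + PP p w}" for w
    define U where "U k = (if k \<in> to_nat ` W then cl (from_nat k) else {})" for k
    have Uw: "U (to_nat w) = cl w" if "w \<in> W" for w using that by (auto simp: U_def)
    have wD: "set w \<subseteq> {1..}" if "w \<in> W" for w using that D by (auto simp: W_def)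
    have cov: "delta_cover \<delta> ?E U"
      unfolding delta_cover_def
    proof (intro conjI allI)
      show "?E \<subseteq> (\<Union>i. U i)"
      proof (rule image_subsetI)
      fix \<omega> :: "nat \<Rightarrow> nat" assume "\<omega> \<in> {\<omega>. \<forall>j. \<omega> j \<in> D}"
      hence dg: "dig \<omega>" and w: "pre \<omega> n \<in> W" using D by (auto simp: dig_def W_def set_pre)
      have "coding_map p \<omega> \<in> cl (pre \<omega> n)"
        using coding_in_I[OF dg, of n] I_eq[OF set_pre_dig[OF dg]] by (auto simp: cl_def)
      thus "coding_map p \<omega> \<in> (\<Union>i. U i)" using Uw[OF w] by blast
      qed
    next
      fix i show "bounded (U i)" by (auto simp: U_def cl_def)
    next
      fix i show "diameter (U i) \<le> \<delta>"
      proof (cases "i \<in> to_nat ` W")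
        case True
        then obtain w where w: "w \<in> W" "i = to_nat w" by auto
        have "diameter (U i) = PP p w" using Uw[OF w(1)] w PP_pos[OF wD[OF w(1)]]
          by (simp add: cl_def diameter_closed_interval)
        also have "\<dots> \<le> M ^ n" using PP_le_M[OF wD[OF w(1)]] w by (simp add: W_def)
        finally show ?thesis using n by simp
      qed (use \<delta> in \<open>simp add: U_def\<close>)
    qed
    have "(\<Sum>i. ennreal (diameter (U i) powr s)) \<le> ennreal e"
    proof (rule suminf_le_const[OF summableI])
      fix N
      define W' where "W' = {w\<in>W. to_nat w < N}"
      have fW': "finite W'"
        by (rule finite_subset[OF _ finite_vimageI[OF finite_lessThan[of N] inj_to_nat]])
           (auto simp: W'_def)
      have "(\<Sum>i<N. diameter (U i) powr s) = (\<Sum>i\<in>{..<N} \<inter> to_nat ` W. diameter (U i) powr s)"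
        by (rule sum.mono_neutral_right) (auto simp: U_def)
      also have "{..<N} \<inter> to_nat ` W = to_nat ` W'" by (auto simp: W'_def)
      also have "(\<Sum>i\<in>to_nat ` W'. diameter (U i) powr s) = (\<Sum>w\<in>W'. diameter (U (to_nat w)) powr s)"
        by (simp add: sum.reindex[OF inj_on_subset[OF inj_to_nat]])
      also have "\<dots> = (\<Sum>w\<in>W'. PP p w powr s)"
      proof (rule sum.cong[OF refl])
        fix w assume "w \<in> W'"
        hence w: "w \<in> W" by (simp add: W'_def)
        show "diameter (U (to_nat w)) powr s = PP p w powr s"
          using Uw[OF w] PP_pos[OF wD[OF w]] by (simp add: cl_def diameter_closed_interval)
      qed
      also have "\<dots> \<le> (\<Sum>w\<in>W'. K ^ n * PP p w powr d)"
      proof (rule sum_mono)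
        fix w assume "w \<in> W'"
        hence w: "w \<in> W" by (simp add: W'_def)
        have pos: "0 < PP p w" by (rule PP_pos[OF wD[OF w]])
        have "PP p w powr s = PP p w powr d * PP p w powr (s - d)"
          by (simp add: powr_add[symmetric])
        also have "PP p w powr (s - d) \<le> (M ^ n) powr (s - d)"
          using PP_le_M[OF wD[OF w]] w pos d by (intro powr_mono2) (auto simp: W_def)
        also have "(M ^ n) powr (s - d) = K ^ n" by (simp add: power_powr K_def)
        finally show "PP p w powr s \<le> K ^ n * PP p w powr d"
          using pos by (simp add: mult.commute mult_left_mono)
      qed
      also have "\<dots> = K ^ n * (\<Sum>w\<in>W'. PP p w powr d)" by (simp add: sum_distrib_left)
      also have "\<dots> \<le> K ^ n * 1"
        using K by (intro mult_left_mono words_sum_le1[OF fin D fW', of n]) (auto simp: W'_def W_def)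
      finally have "(\<Sum>i<N. diameter (U i) powr s) \<le> e" using n by simp
      thus "(\<Sum>i<N. ennreal (diameter (U i) powr s)) \<le> ennreal e"
        by (subst sum_ennreal) (auto intro: ennreal_leI)
    qed
    hence "hausdorff_content s \<delta> ?E \<le> ennreal e"
      unfolding hausdorff_content_def using cov by (meson INF_lower2 mem_Collect_eq)
    thus "hausdorff_content s \<delta> ?E \<le> 0 + ennreal e" by simp
  qed
  thus ?thesis by simp
qed

end



lemma count_sep:
  fixes A :: "real set"
  assumes fin: "finite A" and rng: "\<And>a. a \<in> A \<Longrightarrow> lo < a \<and> a < lo + L"
    and sep: "\<And>a b. a \<in> A \<Longrightarrow> b \<in> A \<Longrightarrow> a \<noteq> b \<Longrightarrow> g \<le> \<bar>a - b\<bar>" and g: "0 < g"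
  shows "card A \<le> nat \<lfloor>L / g\<rfloor> + 1"
proof -
  define f where "f a = nat \<lfloor>(a - lo) / g\<rfloor>" for a
  have inj: "inj_on f A"
  proof (rule inj_onI, rule ccontr)
    fix a b assume ab: "a \<in> A" "b \<in> A" "f a = f b" "a \<noteq> b"
    have pa: "0 \<le> (a - lo) / g" and pb: "0 \<le> (b - lo) / g" using rng[OF ab(1)] rng[OF ab(2)] g by auto
    have fa: "0 \<le> \<lfloor>(a - lo) / g\<rfloor>" and fb: "0 \<le> \<lfloor>(b - lo) / g\<rfloor>" using pa pb by auto
    have "\<lfloor>(a - lo) / g\<rfloor> = \<lfloor>(b - lo) / g\<rfloor>" using ab(3) fa fb by (simp add: f_def eq_nat_nat_iff)
    hence "\<bar>(a - lo) / g - (b - lo) / g\<bar> < 1" by linarith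
    hence "\<bar>a - b\<bar> / g < 1" using g by (simp add: diff_divide_distrib[symmetric] abs_divide)
    hence "\<bar>a - b\<bar> < g" using g by (simp add: divide_less_eq)
    thus False using sep[OF ab(1,2,4)] by simp
  qed
  have sub: "f ` A \<subseteq> {0..nat \<lfloor>L / g\<rfloor>}"
  proof
    fix y assume "y \<in> f ` A"
    then obtain a where a: "a \<in> A" "y = f a" by auto
    have "(a - lo) / g \<le> L / g" using rng[OF a(1)] g by (intro divide_right_mono) auto
    hence "\<lfloor>(a - lo) / g\<rfloor> \<le> \<lfloor>L / g\<rfloor>" by (rule floor_mono)
    thus "y \<in> {0..nat \<lfloor>L / g\<rfloor>}" using a by (auto simp: f_def nat_mono)
  qed
  have "card A = card (f ` A)" using card_image[OF inj] by simp
  also have "\<dots> \<le> card {0..nat \<lfloor>L / g\<rfloor>}" by (rule card_mono[OF _ sub]) simp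
  finally show ?thesis by simp
qed

lemma qsum_len:
  fixes q :: "nat \<Rightarrow> real"
  assumes "finite F" "sum q F = 1"
  shows "(\<Sum>v\<in>{v. set v \<subseteq> F \<and> length v = n}. prod_list (map q v)) = 1"
proof (induction n)
  case 0
  have "{v. set v \<subseteq> F \<and> length v = 0} = {[]}" by auto
  thus ?case by simp
next
  case (Suc n)
  let ?L = "{v. set v \<subseteq> F \<and> length v = n}"
  have fL: "finite ?L" using finite_lists_length_eq[OF assms(1)] by simp
  have "(\<Sum>v\<in>{v. set v \<subseteq> F \<and> length v = Suc n}. prod_list (map q v))
        = (\<Sum>v\<in>(\<lambda>(xs, n). n # xs) ` (?L \<times> F). prod_list (map q v))"
    by (simp only: lists_length_Suc_eq)
  also have "\<dots> = (\<Sum>(xs, i)\<in>?L \<times> F. q i * prod_list (map q xs))"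
    by (subst sum.reindex) (auto simp: inj_on_def case_prod_beta intro!: sum.cong)
  also have "\<dots> = (\<Sum>xs\<in>?L. \<Sum>i\<in>F. prod_list (map q xs) * q i)"
    unfolding sum.cartesian_product[symmetric] by (rule sum.cong[OF refl], rule sum.cong[OF refl], rule mult.commute)
  also have "\<dots> = (\<Sum>xs\<in>?L. prod_list (map q xs)) * sum q F"
    by (simp add: sum_product)
  also have "\<dots> = 1" using Suc assms by simp
  finally show ?case .
qed

lemma sum_UN_le_nonneg:
  fixes f :: "'a \<Rightarrow> real"
  assumes "finite I" "\<And>i. i \<in> I \<Longrightarrow> finite (A i)" "\<And>x. 0 \<le> f x"
  shows "sum f (\<Union>i\<in>I. A i) \<le> (\<Sum>i\<in>I. sum f (A i))"
  using assms(1,2)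
proof (induction I rule: finite_induct)
  case empty thus ?case by simp
next
  case (insert j I)
  have "sum f (\<Union>i\<in>insert j I. A i) = sum f (A j \<union> (\<Union>i\<in>I. A i))" by simp
  also have "\<dots> \<le> sum f (A j) + sum f (\<Union>i\<in>I. A i)"
    using insert by (subst sum_Un) (auto intro: assms(3) sum_nonneg)
  also have "\<dots> \<le> sum f (A j) + (\<Sum>i\<in>I. sum f (A i))" using insert by simp
  finally show ?case using insert by simp
qed

lemma prefix_cover:
  fixes q :: "nat \<Rightarrow> real"
  assumes F: "finite F" "F \<noteq> {}" and q: "\<And>i. 0 \<le> q i" "sum q F = 1"
    and W: "finite W" "\<And>w. w \<in> W \<Longrightarrow> set w \<subseteq> F"
    and cov: "\<And>\<omega>. (\<forall>j. \<omega> j \<in> F) \<Longrightarrow> \<exists>n. pre \<omega> n \<in> W"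
  shows "1 \<le> (\<Sum>w\<in>W. prod_list (map q w))"
proof -
  obtain f0 where f0: "f0 \<in> F" using F by auto
  have "\<exists>n. pre (\<lambda>_. f0) n \<in> W" by (rule cov) (use f0 in auto)
  hence Wne: "W \<noteq> {}" by auto
  define N where "N = Max (length ` W)"
  have lenN: "length w \<le> N" if "w \<in> W" for w using W(1) that by (auto simp: N_def)
  let ?L = "\<lambda>n. {v. set v \<subseteq> F \<and> length v = n}"
  have Q: "0 \<le> prod_list (map q v)" for v by (induction v) (auto intro: q mult_nonneg_nonneg)
  have ex: "\<exists>w\<in>W. take (length w) v = w" if v: "v \<in> ?L N" for v
  proof -
    define \<omega> where "\<omega> k = (if k < N then v ! k else f0)" for k
    have "\<forall>j. \<omega> j \<in> F" using v f0 by (auto simp: \<omega>_def)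
    then obtain n where n: "pre \<omega> n \<in> W" using cov by blast
    have "n \<le> N" using lenN[OF n] by simp
    hence "pre \<omega> n = take n v" using v
      by (intro nth_equalityI) (auto simp: pre_def \<omega>_def nth_take)
    thus ?thesis using n by (metis length_pre)
  qed
  have ext: "(\<Sum>v\<in>{v\<in>?L N. take (length w) v = w}. prod_list (map q v)) = prod_list (map q w)"
    if w: "w \<in> W" for w
  proof -
    have e: "{v\<in>?L N. take (length w) v = w} = (\<lambda>u. w @ u) ` ?L (N - length w)"
    proof (intro equalityI subsetI)
      fix v assume "v \<in> {v\<in>?L N. take (length w) v = w}"
      hence v: "set v \<subseteq> F" "length v = N" "take (length w) v = w" by auto
      have "v = w @ drop (length w) v" using v(3) by (metis append_take_drop_id)
      moreover have "drop (length w) v \<in> ?L (N - length w)" using v by (auto dest: in_set_dropD)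
      ultimately show "v \<in> (\<lambda>u. w @ u) ` ?L (N - length w)" by blast
    next
      fix v assume "v \<in> (\<lambda>u. w @ u) ` ?L (N - length w)"
      then obtain u where u: "set u \<subseteq> F" "length u = N - length w" "v = w @ u" by auto
      show "v \<in> {v\<in>?L N. take (length w) v = w}" using u W(2)[OF w] lenN[OF w] by auto
    qed
    have "(\<Sum>v\<in>(\<lambda>u. w @ u) ` ?L (N - length w). prod_list (map q v))
          = (\<Sum>u\<in>?L (N - length w). prod_list (map q w) * prod_list (map q u))"
      by (subst sum.reindex) (auto simp: inj_on_def)
    also have "\<dots> = prod_list (map q w)"
      by (simp add: sum_distrib_left[symmetric] qsum_len[OF F(1) q(2)])
    finally show ?thesis using e by simp
  qed
  have "1 = (\<Sum>v\<in>?L N. prod_list (map q v))" using qsum_len[OF F(1) q(2)] by simp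
  also have "\<dots> \<le> (\<Sum>v\<in>?L N. \<Sum>w\<in>W. if take (length w) v = w then prod_list (map q v) else 0)"
  proof (rule sum_mono)
    fix v assume v: "v \<in> ?L N"
    obtain w where w: "w \<in> W" "take (length w) v = w" using ex[OF v] by blast
    have "prod_list (map q v) = (if take (length w) v = w then prod_list (map q v) else 0)" using w by simp
    also have "\<dots> \<le> (\<Sum>w\<in>W. if take (length w) v = w then prod_list (map q v) else 0)"
      by (rule member_le_sum[OF w(1)]) (auto intro: Q W(1))
    finally show "prod_list (map q v) \<le> \<dots>" .
  qed
  also have "\<dots> = (\<Sum>w\<in>W. \<Sum>v\<in>?L N. if take (length w) v = w then prod_list (map q v) else 0)"
    by (rule sum.swap)
  also have "\<dots> = (\<Sum>w\<in>W. prod_list (map q w))"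
  proof (rule sum.cong[OF refl])
    fix w assume w: "w \<in> W"
    have fL: "finite (?L N)" using finite_lists_length_eq[OF F(1)] by simp
    have "(\<Sum>v\<in>?L N. if take (length w) v = w then prod_list (map q v) else 0)
         = (\<Sum>v\<in>{v\<in>?L N. take (length w) v = w}. prod_list (map q v))"
      by (rule sum.inter_filter[OF fL, symmetric])
    thus "(\<Sum>v\<in>?L N. if take (length w) v = w then prod_list (map q v) else 0) = prod_list (map q w)"
      using ext[OF w] by simp
  qed
  finally show ?thesis .
qed




context digits begin

definition cutn :: "real \<Rightarrow> (nat \<Rightarrow> nat) \<Rightarrow> nat" where
  "cutn l \<omega> = (LEAST n. PP p (pre \<omega> n) \<le> l)"

definition cutw :: "real \<Rightarrow> (nat \<Rightarrow> nat) \<Rightarrow> nat list" where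
  "cutw l \<omega> = pre \<omega> (cutn l \<omega>)"

lemma exists_n0: assumes "0 < l" shows "\<exists>n0. M ^ n0 \<le> l"
proof -
  have "(\<lambda>n. M ^ n) \<longlonglongrightarrow> 0" by (rule LIMSEQ_realpow_zero) (use M_pos M_lt1 in auto)
  hence "\<forall>\<^sub>F n in sequentially. M ^ n < l" using assms by (rule order_tendstoD)
  thus ?thesis by (auto simp: eventually_sequentially intro: less_imp_le)
qed

lemma cut_basic:
  assumes d: "dig \<omega>" and l: "0 < l" "l < 1" and n0: "M ^ n0 \<le> l"
  shows "PP p (cutw l \<omega>) \<le> l" "cutn l \<omega> \<le> n0" "\<And>k. k < cutn l \<omega> \<Longrightarrow> l < PP p (pre \<omega> k)"
    "1 \<le> cutn l \<omega>"
proof -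
  have ex: "PP p (pre \<omega> n0) \<le> l" using PP_le_M[OF set_pre_dig[OF d], of n0] n0 by simp
  show "PP p (cutw l \<omega>) \<le> l" unfolding cutw_def cutn_def by (rule LeastI[of _ n0]) (rule ex)
  show "cutn l \<omega> \<le> n0" unfolding cutn_def by (rule Least_le) (rule ex)
  show "\<And>k. k < cutn l \<omega> \<Longrightarrow> l < PP p (pre \<omega> k)" unfolding cutn_def
    using not_less_Least by force
  have "PP p (pre \<omega> 0) = 1" by (simp add: pre_def PP_def)
  hence "cutn l \<omega> \<noteq> 0" using \<open>PP p (cutw l \<omega>) \<le> l\<close> l unfolding cutw_def by (metis not_less)
  thus "1 \<le> cutn l \<omega>" by simp
qed

lemma cut_lower:
  assumes d: "dig \<omega>" and l: "0 < l" "l < 1" and n0: "M ^ n0 \<le> l"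
    and m: "0 < m" "\<And>j. m \<le> p (\<omega> j)"
  shows "m * l < PP p (cutw l \<omega>)"
proof -
  obtain k where k: "cutn l \<omega> = Suc k" using cut_basic(4)[OF d l n0] by (cases "cutn l \<omega>") auto
  have "l < PP p (pre \<omega> k)" using cut_basic(3)[OF d l n0, of k] k by simp
  have "m * l \<le> p (\<omega> k) * l" using m l by (intro mult_right_mono) auto
  also have "\<dots> < p (\<omega> k) * PP p (pre \<omega> k)"
    using \<open>l < PP p (pre \<omega> k)\<close> p_pos d by (simp add: dig_def)
  also have "\<dots> = PP p (cutw l \<omega>)" unfolding cutw_def k PP_pre_Suc by simp
  finally show ?thesis .
qed

lemma cut_pfx:
  assumes d: "dig \<omega>" "dig \<omega>'" and l: "0 < l" "l < 1" and n0: "M ^ n0 \<le> l"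
    and pf: "pfx (cutw l \<omega>) (cutw l \<omega>')"
  shows "cutw l \<omega> = cutw l \<omega>'"
proof -
  let ?k = "cutn l \<omega>" and ?k' = "cutn l \<omega>'"
  obtain u where u: "cutw l \<omega>' = cutw l \<omega> @ u" using pf by (auto simp: pfx_def)
  have kk: "?k \<le> ?k'" using arg_cong[OF u, of length] by (simp add: cutw_def)
  have e: "pre \<omega> ?k = pre \<omega>' ?k"
  proof -
    have "take ?k (cutw l \<omega>') = cutw l \<omega>" using u by (simp add: cutw_def)
    thus ?thesis using take_pre[OF kk, of \<omega>'] by (simp add: cutw_def)
  qed
  show ?thesis
  proof (cases "?k < ?k'")
    case True
    have "l < PP p (pre \<omega>' ?k)" by (rule cut_basic(3)[OF d(2) l n0 True])
    moreover have "PP p (pre \<omega> ?k) \<le> l" using cut_basic(1)[OF d(1) l n0] by (simp add: cutw_def)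
    ultimately show ?thesis using e by simp
  next
    case False
    hence "?k = ?k'" using kk by simp
    thus ?thesis using arg_cong[OF u, of length] u by (simp add: cutw_def)
  qed
qed

lemma cut_disj:
  assumes d: "dig \<omega>" "dig \<omega>'" and l: "0 < l" "l < 1" and n0: "M ^ n0 \<le> l"
    and ne: "cutw l \<omega> \<noteq> cutw l \<omega>'"
  shows "I (cutw l \<omega>) \<inter> I (cutw l \<omega>') = {}"
proof (rule I_disj)
  show "set (cutw l \<omega>) \<subseteq> {1..}" "set (cutw l \<omega>') \<subseteq> {1..}"
    unfolding cutw_def using set_pre_dig d by auto
  show "\<not> pfx (cutw l \<omega>) (cutw l \<omega>')" using cut_pfx[OF d l n0] ne by blast
  show "\<not> pfx (cutw l \<omega>') (cutw l \<omega>)" using cut_pfx[OF d(2,1) l n0] ne by metis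
qed

end



context digits begin

lemma W_props:
  fixes x :: real
  assumes F: "finite F" "F \<subseteq> {1..}" and m: "0 < m" "\<And>i. i \<in> F \<Longrightarrow> m \<le> p i"
    and l: "0 < l" "l < 1"
  defines "Wx \<equiv> cutw l ` {\<omega>. (\<forall>j. \<omega> j \<in> F) \<and> coding_map p \<omega> \<in> ball x (l/2)}"
  shows "finite Wx" "card Wx \<le> nat \<lfloor>2 / m\<rfloor> + 1" "\<And>w. w \<in> Wx \<Longrightarrow> set w \<subseteq> F \<and> PP p w \<le> l"
proof -
  obtain n0 where n0: "M ^ n0 \<le> l" using exists_n0[OF l(1)] by blast
  have dg: "dig \<omega>" if "\<forall>j. \<omega> j \<in> F" for \<omega> using that F(2) by (auto simp: dig_def)
  have setc: "set (cutw l \<omega>) \<subseteq> F" if "\<forall>j. \<omega> j \<in> F" for \<omega>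
    using that by (auto simp: cutw_def set_pre)
  show "finite Wx"
  proof (rule finite_subset[OF _ finite_lists_length_le[OF F(1), of n0]])
    show "Wx \<subseteq> {xs. set xs \<subseteq> F \<and> length xs \<le> n0}"
      unfolding Wx_def using setc cut_basic(2)[OF dg l n0] by (auto simp: cutw_def)
  qed
  show "\<And>w. w \<in> Wx \<Longrightarrow> set w \<subseteq> F \<and> PP p w \<le> l"
    unfolding Wx_def using setc cut_basic(1)[OF dg l n0] by auto
  define a where "a w = lmap p w 0" for w
  define lo where "lo = x - 3 * l / 2"
  have Iw: "I w = {a w ..< a w + PP p w}" if "w \<in> Wx" for w
    using that I_eq setc F(2) unfolding Wx_def a_def by blast
  have rng: "lo < a w \<and> a w < lo + 2 * l" and low: "m * l < PP p w" and inI: "a w \<in> I w"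
    if w: "w \<in> Wx" for w
  proof -
    obtain \<omega> where \<omega>: "\<forall>j. \<omega> j \<in> F" "coding_map p \<omega> \<in> ball x (l/2)" "w = cutw l \<omega>"
      using w unfolding Wx_def by auto
    have c: "coding_map p \<omega> \<in> I w" using coding_in_I[OF dg[OF \<omega>(1)]] \<omega>(3) by (simp add: cutw_def)
    have P: "PP p w \<le> l" using cut_basic(1)[OF dg[OF \<omega>(1)] l n0] \<omega>(3) by simp
    have dd: "\<bar>coding_map p \<omega> - x\<bar> < l / 2" using \<omega>(2) by (simp add: dist_real_def abs_minus_commute)
    have d1: "x - l/2 < coding_map p \<omega>" "coding_map p \<omega> < x + l/2" using dd abs_less_iff[of "coding_map p \<omega> - x" "l/2"] by linarith+
    have c1: "a w \<le> coding_map p \<omega>" "coding_map p \<omega> < a w + PP p w" using c Iw[OF w] by auto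
    show "lo < a w \<and> a w < lo + 2 * l" using c1 d1 P unfolding lo_def by linarith
    show "m * l < PP p w" using cut_lower[OF dg[OF \<omega>(1)] l n0 m(1)] m(2) \<omega> by auto
    thus "a w \<in> I w" using Iw[OF w] mult_pos_pos[OF m(1) l(1)] by auto
  qed
  have gap: "m * l \<le> \<bar>a w - a v\<bar>" if wv: "w \<in> Wx" "v \<in> Wx" "w \<noteq> v" for w v
  proof -
    have disj: "I w \<inter> I v = {}"
    proof -
      obtain \<omega> where \<omega>: "\<forall>j. \<omega> j \<in> F" "w = cutw l \<omega>" using wv(1) unfolding Wx_def by auto
      obtain \<omega>' where \<omega>': "\<forall>j. \<omega>' j \<in> F" "v = cutw l \<omega>'" using wv(2) unfolding Wx_def by auto
      show ?thesis using cut_disj[OF dg[OF \<omega>(1)] dg[OF \<omega>'(1)] l n0] \<omega> \<omega>' wv(3) by simp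
    qed
    have key: "m * l \<le> a v' - a w'" if "w' \<in> Wx" "v' \<in> Wx" "I w' \<inter> I v' = {}" "a w' \<le> a v'" for w' v'
    proof -
      have "a v' \<notin> I w'" using that inI[OF that(2)] by blast
      hence "a w' + PP p w' \<le> a v'" using Iw[OF that(1)] that(4) by auto
      thus ?thesis using low[OF that(1)] by simp
    qed
    show ?thesis
    proof (cases "a w \<le> a v")
      case True thus ?thesis using key[OF wv(1,2) disj] by simp
    next
      case False thus ?thesis using key[OF wv(2,1)] disj by (simp add: Int_commute)
    qed
  qed
  have inj: "inj_on a Wx"
  proof (rule inj_onI, rule ccontr)
    fix w v assume "w \<in> Wx" "v \<in> Wx" "a w = a v" "w \<noteq> v"
    thus False using gap[of w v] mult_pos_pos[OF m(1) l(1)] by simp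
  qed
  have "card Wx = card (a ` Wx)" using card_image[OF inj] by simp
  also have "\<dots> \<le> nat \<lfloor>(2 * l) / (m * l)\<rfloor> + 1"
  proof (rule count_sep)
    show "finite (a ` Wx)" using \<open>finite Wx\<close> by simp
    show "\<And>b. b \<in> a ` Wx \<Longrightarrow> lo < b \<and> b < lo + 2 * l" using rng by auto
    show "\<And>b c. b \<in> a ` Wx \<Longrightarrow> c \<in> a ` Wx \<Longrightarrow> b \<noteq> c \<Longrightarrow> m * l \<le> \<bar>b - c\<bar>"
      using gap by auto
    show "0 < m * l" using m l by simp
  qed
  also have "(2 * l) / (m * l) = 2 / m" using l by simp
  finally show "card Wx \<le> nat \<lfloor>2 / m\<rfloor> + 1" .
qed

end



context digits begin

lemma core:
  assumes F: "finite F" "F \<noteq> {}" "F \<subseteq> {1..}" and t: "0 < t" and S: "1 \<le> (\<Sum>i\<in>F. p i powr t)"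
  shows "\<exists>c>0. \<forall>U. delta_cover (1/8) (coding_map p ` {\<omega>. \<forall>j. \<omega> j \<in> F}) U \<longrightarrow>
            ennreal c \<le> (\<Sum>i. ennreal (diameter (U i) powr t))"
proof -
  let ?K = "coding_map p ` {\<omega>. \<forall>j. \<omega> j \<in> F}"
  define SF where "SF = (\<Sum>i\<in>F. p i powr t)"
  have SF1: "1 \<le> SF" using S by (simp add: SF_def)
  define q where "q i = p i powr t / SF" for i
  have q0: "0 \<le> q i" for i using SF1 by (simp add: q_def)
  have qs: "sum q F = 1" using SF1 by (simp add: q_def SF_def sum_divide_distrib[symmetric])
  have qle: "q i \<le> p i powr t" for i
  proof -
    have "p i powr t / SF \<le> p i powr t / 1" using SF1 by (intro divide_left_mono) auto
    thus ?thesis by (simp add: q_def)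
  qed
  have Q0: "0 \<le> prod_list (map q w)" for w by (induction w) (auto intro: q0 mult_nonneg_nonneg)
  have Qle: "prod_list (map q w) \<le> PP p w powr t" if "set w \<subseteq> F" for w
    using that
  proof (induction w)
    case Nil thus ?case by (simp add: PP_def)
  next
    case (Cons i w)
    have i: "1 \<le> i" using Cons F(3) by auto
    have "prod_list (map q (i # w)) = q i * prod_list (map q w)" by simp
    also have "\<dots> \<le> p i powr t * PP p w powr t"
      using Cons by (intro mult_mono qle) (auto intro: q0 Q0)
    also have "\<dots> = PP p (i # w) powr t"
      using p_pos[OF i] PP_nonneg[of w] Cons F(3) by (simp add: PP_def powr_mult)
    finally show ?case .
  qed
  define m where "m = Min (p ` F)"
  have m: "0 < m" "\<And>i. i \<in> F \<Longrightarrow> m \<le> p i"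
  proof -
    have "m \<in> p ` F" unfolding m_def using F by (intro Min_in) auto
    thus "0 < m" using F(3) p_pos by auto
    show "\<And>i. i \<in> F \<Longrightarrow> m \<le> p i" unfolding m_def using F by auto
  qed
  define N0 where "N0 = real (nat \<lfloor>2 / m\<rfloor> + 1)"
  have N0: "1 \<le> N0" by (simp add: N0_def)
  define A where "A = (2::real) powr t"
  have A: "1 \<le> A" unfolding A_def using t by (intro ge_one_powr_ge_zero) auto
  define c where "c = 1 / (2 * N0 * A * A)"
  have c: "0 < c" using N0 A by (simp add: c_def)
  define \<epsilon> where "\<epsilon> = min ((1/4) powr t) (1 / (2 * N0 * A))"
  have \<epsilon>: "0 < \<epsilon>" "\<epsilon> \<le> (1/4) powr t" "\<epsilon> \<le> 1 / (2 * N0 * A)" using N0 A by (auto simp: \<epsilon>_def)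
  show ?thesis
  proof (intro exI conjI allI impI)
    show "0 < c" by (rule c)
    fix U assume cov: "delta_cover (1/8) ?K U"
    have bU: "bounded (U i)" and dU: "diameter (U i) \<le> 1/8" and KU: "?K \<subseteq> (\<Union>i. U i)" for i
      using cov by (auto simp: delta_cover_def)
    define r where "r i = diameter (U i)" for i
    have r0: "0 \<le> r i" for i unfolding r_def by (rule diameter_ge_0[OF bU])
    have r1: "r i \<le> 1/8" for i unfolding r_def by (rule dU)
    show "ennreal c \<le> (\<Sum>i. ennreal (diameter (U i) powr t))"
    proof (rule ccontr)
      assume "\<not> ?thesis"
      hence lt: "(\<Sum>i. ennreal (r i powr t)) < ennreal c" unfolding r_def by (rule not_le_imp_less)
      have nt: "(\<Sum>i. ennreal (r i powr t)) \<noteq> top"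
        using order.strict_trans[OF lt ennreal_less_top] by (simp only: less_top)
      have summ: "summable (\<lambda>i. r i powr t)" by (rule summable_suminf_not_top) (use nt in auto)
      define X where "X = (\<Sum>i. r i powr t)"
      have X0: "0 \<le> X" unfolding X_def by (rule suminf_nonneg[OF summ]) simp
      have eq: "(\<Sum>i. ennreal (r i powr t)) = ennreal X" unfolding X_def by (rule suminf_ennreal2[OF _ summ]) simp
      have "ennreal X < ennreal c" using lt unfolding eq .
      hence Xc: "X < c" using X0 by (simp add: ennreal_less_iff)
      define a where "a i = \<epsilon> * (1/2) ^ Suc i" for i
      have a0: "0 < a i" for i using \<epsilon> by (simp add: a_def)
      have a_lt: "a i < (1/4) powr t" for i
      proof -
        have "(1/2::real) ^ Suc i < 1" by (rule power_Suc_less_one) auto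
        hence "a i < \<epsilon>" using \<epsilon> by (simp add: a_def)
        thus ?thesis using \<epsilon> by simp
      qed
      define e where "e i = a i powr (1/t)" for i
      have e0: "0 < e i" for i using a0[of i] by (simp add: e_def)
      have et: "e i powr t = a i" for i using a0[of i] t by (simp add: e_def powr_powr)
      have e_lt: "e i < 1/4" for i
      proof -
        have "e i < ((1/4) powr t) powr (1/t)" unfolding e_def
          using a0 a_lt t by (intro powr_less_mono2) (auto intro: less_imp_le)
        also have "\<dots> = 1/4" using t by (simp add: powr_powr)
        finally show ?thesis .
      qed
      define l where "l i = 2 * r i + e i" for i
      have l0: "0 < l i" for i using r0[of i] e0[of i] unfolding l_def by linarith
      have l1: "l i < 1" for i using r1[of i] e_lt[of i] unfolding l_def by linarith
      define x where "x i = (if U i = {} then 0 else (SOME y. y \<in> U i))" for i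
      define V where "V i = ball (x i) (l i / 2)" for i
      have UV: "U i \<subseteq> V i" for i
      proof
        fix y assume y: "y \<in> U i"
        hence "U i \<noteq> {}" by auto
        hence xi: "x i \<in> U i" unfolding x_def using y by (simp add: some_in_eq)
        have "dist (x i) y \<le> r i" unfolding r_def by (rule diameter_bounded_bound[OF bU xi y])
        also have "\<dots> < l i / 2" using e0[of i] by (simp add: l_def)
        finally show "y \<in> V i" by (simp add: V_def)
      qed
      obtain I where I: "finite I" "?K \<subseteq> (\<Union>i\<in>I. V i)"
      proof (rule compactE_image[OF compact_K[OF F(1) F(3)], of UNIV V])
        show "\<And>i. i \<in> UNIV \<Longrightarrow> open (V i)" by (simp add: V_def)
        have "(\<Union>i. U i) \<subseteq> (\<Union>i. V i)" by (rule UN_mono[OF subset_refl UV])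
        thus "?K \<subseteq> (\<Union>i\<in>UNIV. V i)" using KU by (rule subset_trans[rotated])
      qed (rule that; assumption)
      define Wx where "Wx i = cutw (l i) ` {\<omega>. (\<forall>j. \<omega> j \<in> F) \<and> coding_map p \<omega> \<in> ball (x i) (l i / 2)}" for i
      have Wfin: "finite (Wx i)" and Wcard: "card (Wx i) \<le> nat \<lfloor>2 / m\<rfloor> + 1"
        and Wel: "\<And>w. w \<in> Wx i \<Longrightarrow> set w \<subseteq> F \<and> PP p w \<le> l i" for i
        using W_props[OF F(1) F(3) m l0[of i] l1[of i], where x="x i"] by (auto simp: Wx_def)
      define WW where "WW = (\<Union>i\<in>I. Wx i)"
      have "1 \<le> (\<Sum>w\<in>WW. prod_list (map q w))"
      proof (rule prefix_cover[OF F(1) F(2) q0 qs])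
        show "finite WW" using I(1) Wfin by (simp add: WW_def)
        show "\<And>w. w \<in> WW \<Longrightarrow> set w \<subseteq> F" using Wel by (auto simp: WW_def)
        fix \<omega> :: "nat \<Rightarrow> nat" assume \<omega>: "\<forall>j. \<omega> j \<in> F"
        hence "coding_map p \<omega> \<in> ?K" by auto
        then obtain i where i: "i \<in> I" "coding_map p \<omega> \<in> V i" using I(2) by blast
        hence "cutw (l i) \<omega> \<in> WW" using \<omega> by (auto simp: WW_def Wx_def V_def)
        thus "\<exists>n. pre \<omega> n \<in> WW" by (auto simp: cutw_def)
      qed
      also have "\<dots> \<le> (\<Sum>i\<in>I. \<Sum>w\<in>Wx i. prod_list (map q w))"
        unfolding WW_def by (rule sum_UN_le_nonneg[OF I(1) Wfin]) (rule Q0)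
      also have "\<dots> \<le> (\<Sum>i\<in>I. N0 * l i powr t)"
      proof (rule sum_mono)
        fix i assume "i \<in> I"
        have "(\<Sum>w\<in>Wx i. prod_list (map q w)) \<le> (\<Sum>w\<in>Wx i. l i powr t)"
        proof (rule sum_mono)
          fix w assume w: "w \<in> Wx i"
          have ws: "set w \<subseteq> {1..}" using Wel[OF w] F(3) by auto
          have "prod_list (map q w) \<le> PP p w powr t" using Qle Wel[OF w] by auto
          also have "\<dots> \<le> l i powr t"
            using Wel[OF w] PP_nonneg[OF ws] t by (intro powr_mono2) auto
          finally show "prod_list (map q w) \<le> l i powr t" .
        qed
        also have "\<dots> = real (card (Wx i)) * l i powr t" by simp
        also have "\<dots> \<le> N0 * l i powr t"
          using Wcard[of i] by (intro mult_right_mono) (auto simp: N0_def)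
        finally show "(\<Sum>w\<in>Wx i. prod_list (map q w)) \<le> N0 * l i powr t" .
      qed
      also have "\<dots> \<le> (\<Sum>i\<in>I. N0 * (A * A * r i powr t + A * a i))"
      proof (rule sum_mono)
        fix i assume "i \<in> I"
        have "l i powr t \<le> (2 * max (2 * r i) (e i)) powr t"
          using l0[of i] t by (intro powr_mono2) (auto simp: l_def)
        also have "\<dots> = A * max (2 * r i) (e i) powr t" using r0[of i] e0[of i]
          by (simp add: A_def powr_mult)
        also have "max (2 * r i) (e i) powr t \<le> (2 * r i) powr t + e i powr t"
          by (simp add: max_def)
        also have "(2 * r i) powr t = A * r i powr t" using r0[of i] by (simp add: A_def powr_mult)
        finally have "l i powr t \<le> A * (A * r i powr t + a i)" using A et[of i]
          by (simp add: mult_left_mono)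
        hence "N0 * l i powr t \<le> N0 * (A * (A * r i powr t + a i))"
          using N0 by (intro mult_left_mono) auto
        thus "N0 * l i powr t \<le> N0 * (A * A * r i powr t + A * a i)"
          by (simp add: algebra_simps)
      qed
      also have "\<dots> = N0 * (A * A * (\<Sum>i\<in>I. r i powr t) + A * (\<Sum>i\<in>I. a i))"
        by (simp add: sum.distrib sum_distrib_left[symmetric])
      also have "\<dots> \<le> N0 * (A * A * X + A * \<epsilon>)"
      proof -
        have s1: "(\<Sum>i\<in>I. r i powr t) \<le> X" unfolding X_def
          by (rule sum_le_suminf[OF summ I(1)]) simp
        have sa: "a sums (\<epsilon> * 1)" unfolding a_def by (intro sums_mult power_half_series)
        have s2: "(\<Sum>i\<in>I. a i) \<le> \<epsilon>"
          using sum_le_suminf[OF sums_summable[OF sa] I(1)] sums_unique[OF sa] a0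
          by (simp add: less_imp_le)
        show ?thesis using s1 s2 N0 A by (intro mult_left_mono add_mono) auto
      qed
      also have "\<dots> < 1"
      proof -
        have "N0 * (A * A * X) < N0 * (A * A * c)" using Xc N0 A by simp
        also have "\<dots> = 1/2" using N0 A by (simp add: c_def)
        finally have h1: "N0 * (A * A * X) < 1/2" .
        have "N0 * (A * \<epsilon>) \<le> N0 * (A * (1 / (2 * N0 * A)))" using \<epsilon>(3) N0 A
          by (intro mult_left_mono) auto
        also have "\<dots> = 1/2" using N0 A by simp
        finally have h2: "N0 * (A * \<epsilon>) \<le> 1/2" .
        show ?thesis using h1 h2 by (simp add: algebra_simps)
      qed
      finally show False by simp
    qed
  qed
qed

end



lemma content_mono_exp:
  assumes "s \<le> t" "\<delta> \<le> 1"
  shows "hausdorff_content t \<delta> E \<le> hausdorff_content s \<delta> E"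
  unfolding hausdorff_content_def
proof (rule INF_mono)
  fix U assume U: "U \<in> {U. delta_cover \<delta> E U}"
  show "\<exists>U'\<in>{U. delta_cover \<delta> E U}. (\<Sum>i. ennreal (diameter (U' i) powr t)) \<le> (\<Sum>i. ennreal (diameter (U i) powr s))"
  proof (intro bexI[OF _ U] suminf_le summableI ennreal_leI)
    fix i
    have b: "bounded (U i)" "diameter (U i) \<le> \<delta>" using U by (auto simp: delta_cover_def)
    show "diameter (U i) powr t \<le> diameter (U i) powr s"
      using b assms diameter_ge_0[OF b(1)] by (intro powr_mono') auto
  qed
qed

lemma content_mono_set:
  assumes "K \<subseteq> E"
  shows "hausdorff_content t \<delta> K \<le> hausdorff_content t \<delta> E"
  unfolding hausdorff_content_def
proof (rule INF_superset_mono)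
  show "{U. delta_cover \<delta> E U} \<subseteq> {U. delta_cover \<delta> K U}"
    using assms unfolding delta_cover_def by blast
qed simp

theorem theorem1:
  fixes p :: "nat \<Rightarrow> real" and D :: "nat set" and d :: real
  assumes "prob_supported_N p"
    and "D \<subseteq> {1..}" and "D \<noteq> {}"
    and "0 \<le> d"
    and "((\<lambda>i. p i powr d) has_sum 1) D"
  shows "hausdorff_dim (coding_map p ` {\<omega>. \<forall>j. \<omega> j \<in> D}) = d"
proof -
  interpret digits p using assms(1) by unfold_locales
  let ?E = "coding_map p ` {\<omega>. \<forall>j. \<omega> j \<in> D}"
  let ?S = "{s. 0 \<le> s \<and> hausdorff_measure s ?E = 0}"
  have up: "s \<in> ?S" if s: "d < s" for s
  proof -
    have "hausdorff_measure s ?E \<le> 0"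
      unfolding hausdorff_measure_def
      by (rule SUP_least) (simp add: content_upper[OF assms(2) assms(5) assms(4) s])
    thus ?thesis using s assms(4) by simp
  qed
  have low: "d \<le> s" if s: "s \<in> ?S" for s
  proof (rule ccontr)
    assume "\<not> d \<le> s"
    hence sd: "s < d" by simp
    have s0: "0 \<le> s" using s by simp
    define t where "t = (s + d) / 2"
    have t: "0 < t" "s \<le> t" "t < d" using sd s0 by (auto simp: t_def)
    have H0: "hausdorff_content s (1/8) ?E = 0"
    proof -
      have "hausdorff_content s (1/8) ?E \<le> hausdorff_measure s ?E"
        unfolding hausdorff_measure_def by (rule SUP_upper) simp
      thus ?thesis using s by simp
    qed
    define C where "C = M powr (t - d)"
    have C: "1 < C"
    proof -
      have "M powr (d - t) < 1 powr (d - t)" using M_pos M_lt1 t by (intro powr_less_mono2) auto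
      hence lt: "M powr (d - t) < 1" by simp
      have "C * M powr (d - t) = 1" unfolding C_def using M_pos by (simp add: powr_add[symmetric])
      moreover have "0 < M powr (d - t)" using M_pos by simp
      ultimately show ?thesis using lt by (metis less_1_mult mult.commute mult_less_cancel_right1 not_less order.asym)
    qed
    have "((\<lambda>X. \<Sum>i\<in>X. p i powr d) \<longlongrightarrow> 1) (finite_subsets_at_top D)"
      using assms(5) by (simp add: has_sum_def)
    hence "\<forall>\<^sub>F X in finite_subsets_at_top D. 1 / C < (\<Sum>i\<in>X. p i powr d)"
      using C by (intro order_tendstoD(1)) auto
    then obtain F where F: "finite F" "F \<subseteq> D" "1 / C < (\<Sum>i\<in>F. p i powr d)"
      unfolding eventually_finite_subsets_at_top by blast
    have "1 = C * (1 / C)" using C by simp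
    also have "\<dots> < C * (\<Sum>i\<in>F. p i powr d)" using F(3) C by (intro mult_strict_left_mono) auto
    also have "\<dots> = (\<Sum>i\<in>F. C * p i powr d)" by (simp add: sum_distrib_left)
    also have "\<dots> \<le> (\<Sum>i\<in>F. p i powr t)"
    proof (rule sum_mono)
      fix i assume "i \<in> F"
      hence i: "1 \<le> i" using F(2) assms(2) by auto
      have "C \<le> p i powr (t - d)" unfolding C_def
        using p_pos[OF i] p_le_M[OF i] t by (intro powr_mono2') auto
      hence "C * p i powr d \<le> p i powr (t - d) * p i powr d" by (intro mult_right_mono) auto
      also have "\<dots> = p i powr t" by (simp add: powr_add[symmetric])
      finally show "C * p i powr d \<le> p i powr t" .
    qed
    finally have S1: "1 \<le> (\<Sum>i\<in>F. p i powr t)" by simp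
    have Fne: "F \<noteq> {}" using S1 by auto
    obtain c where c: "0 < c" and cc: "\<And>U. delta_cover (1/8) (coding_map p ` {\<omega>. \<forall>j. \<omega> j \<in> F}) U \<Longrightarrow>
            ennreal c \<le> (\<Sum>i. ennreal (diameter (U i) powr t))"
      using core[OF F(1) Fne _ t(1) S1] F(2) assms(2) by blast
    have "ennreal c \<le> hausdorff_content t (1/8) (coding_map p ` {\<omega>. \<forall>j. \<omega> j \<in> F})"
      unfolding hausdorff_content_def by (rule INF_greatest) (use cc in auto)
    also have "\<dots> \<le> hausdorff_content t (1/8) ?E"
      by (rule content_mono_set) (use F(2) in auto)
    also have "\<dots> \<le> hausdorff_content s (1/8) ?E" by (rule content_mono_exp) (use t in auto)
    also have "\<dots> = 0" by (rule H0)
    finally show False using c by simp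
  qed
  have ne: "?S \<noteq> {}" using up[of "d + 1"] by auto
  have bdd: "bdd_below ?S" by (rule bdd_belowI[of _ 0]) auto
  have "Inf ?S = d"
  proof (rule antisym)
    show "d \<le> Inf ?S" by (rule cInf_greatest[OF ne]) (use low in auto)
    show "Inf ?S \<le> d"
    proof (rule field_le_epsilon)
      fix e :: real assume "0 < e"
      thus "Inf ?S \<le> d + e" using up[of "d + e"] by (intro cInf_lower bdd) auto
    qed
  qed
  thus ?thesis by (simp add: hausdorff_dim_def)
qed



end
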